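(* Let $0<a<1$. Then, as $t\to-\infty$, $$f(t,a)\sim-\frac{1}{\ln(-t/a)+\ln\bigl(\ln(-t/a)-1\bigr)},$$ where $f(t,a)=t\int_0^1(ax)^{-tx}\,dx$. In particular $f(t,a)\to0$ inverse-logarithmically as $t\to-\infty$.
   Context: For real $a>0$ and real $t$, $f(t,a)=t\int_0^1 (ax)^{-tx}\,dx$, where $(ax)^{-tx}=\exp(-tx\ln(ax))$ for $x\in(0,1]$. The notation $g\sim h$ means $g/h\to1$. *)

theory Defs
  imports "HOL-Analysis.Analysis" "HOL-Library.Landau_Symbols"
begin

text \<open>At x = 0 the integrand value is irrelevant (a null set); we use the formula
  with ln 0 = 0, giving 1, which is also the continuous extension.\<close>
definition f :: "real \<Rightarrow> real \<Rightarrow> real" where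
  "f t a = t * integral {0..1} (\<lambda>x. exp (- t * x * ln (a * x)))"

end

theory Submission
  imports Defs "HOL-Real_Asymp.Real_Asymp"
begin

lemma exp_int:
  fixes k :: real
  assumes "k>0" "\<alpha> \<le> \<beta>"
  shows "((\<lambda>x. exp(-k * x)) has_integral (exp(-k * \<alpha>) - exp(-k * \<beta>))/k) {\<alpha>..\<beta>}"
proof -
  have d: "((\<lambda>x. -exp(-k * x)/k) has_vector_derivative exp(-k * x)) (at x within {\<alpha>..\<beta>})" for x
  proof -
    have "((\<lambda>x. -exp(-k * x)/k) has_real_derivative exp(-k * x)) (at x within {\<alpha>..\<beta>})"
      using assms by (auto intro!: derivative_eq_intros)
    then show ?thesis by (simp add: has_real_derivative_iff_has_vector_derivative)
  qed
  have "((\<lambda>x. exp(-k * x)) has_integral ((\<lambda>x. -exp(-k * x)/k) \<beta> - (\<lambda>x. -exp(-k * x)/k) \<alpha>)) {\<alpha>..\<beta>}"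
    by (rule fundamental_theorem_of_calculus[OF assms(2) d])
  then show ?thesis by (simp add: diff_divide_distrib)
qed

lemma cont_int:
  fixes a s :: real
  assumes "a > 0"
  shows "continuous_on {0..1} (\<lambda>x. exp(s * x * ln(a * x)))"
proof -
  have "continuous (at x within {0..1}) (\<lambda>x. exp(s * x * ln(a * x)))" if x: "x \<in> {0..1}" for x
  proof (cases "x = 0")
    case True
    have l1: "((\<lambda>x::real. x * ln x) \<longlongrightarrow> 0) (at_right (0::real))" by real_asymp
    have l2: "((\<lambda>x. x * ln a) \<longlongrightarrow> 0) (at_right 0)"
      by (auto intro!: tendsto_eq_intros)
    have "((\<lambda>x. x * ln(a * x)) \<longlongrightarrow> 0) (at_right 0)"
    proof -
      have "((\<lambda>x. x * ln a + x * ln x) \<longlongrightarrow> 0 + 0) (at_right 0)"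
        by (intro tendsto_add l1 l2)
      moreover have "eventually (\<lambda>x. x * ln a + x * ln x = x * ln(a * x)) (at_right 0)"
        unfolding eventually_at_filter using assms
        by (auto intro!: always_eventually simp: ln_mult algebra_simps)
      ultimately show ?thesis by (simp add: tendsto_cong)
    qed
    then have "((\<lambda>x. exp(s * (x * ln(a * x)))) \<longlongrightarrow> exp(s * 0)) (at_right 0)"
      by (intro tendsto_intros)
    then have "((\<lambda>x. exp(s * x * ln(a * x))) \<longlongrightarrow> 1) (at 0 within {0..1})"
      by (simp add: at_within_Icc_at_right mult.assoc)
    then show ?thesis using True by (simp add: continuous_within)
  next
    case False
    then have "x > 0" using x by auto
    then have "continuous (at x) (\<lambda>x. exp(s * x * ln(a * x)))"
      using assms by (auto intro!: continuous_intros)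
    then show ?thesis by (rule continuous_at_imp_continuous_within)
  qed
  then show ?thesis by (simp add: continuous_on_eq_continuous_within)
qed

lemma U2_lim:
  fixes k :: real
  assumes "k < 0"
  shows "((\<lambda>s. s * ln s * exp(k * (ln s)^2)) \<longlongrightarrow> 0) at_top"
proof (rule tendsto_sandwich[of "\<lambda>_. 0" _ _ "\<lambda>s. s * ln s * exp(-3 * ln s)"])
  have ev1: "eventually (\<lambda>s. ln s \<ge> 3/(-k)) at_top"
    using ln_at_top unfolding filterlim_at_top by blast
  have ev2: "eventually (\<lambda>s::real. s > 1) at_top" by (rule eventually_gt_at_top)
  show "eventually (\<lambda>s. 0 \<le> s * ln s * exp(k * (ln s)^2)) at_top"
    using ev2 by eventually_elim auto
  show "eventually (\<lambda>s. s * ln s * exp(k * (ln s)^2) \<le> s * ln s * exp(-3 * ln s)) at_top"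
    using ev1 ev2
  proof eventually_elim
    case (elim s)
    have "3 \<le> -k * ln s" using elim assms by (simp add: field_simps)
    then have "k * (ln s)^2 \<le> -3 * ln s" using elim
    proof -
      have "(k * ln s) * ln s \<le> (-3) * ln s"
        by (rule mult_right_mono) (use \<open>3 \<le> -k * ln s\<close> elim in auto)
      then show ?thesis by (simp add: power2_eq_square mult.assoc)
    qed
    then show ?case using elim by (intro mult_left_mono) auto
  qed
  show "((\<lambda>_. 0) \<longlongrightarrow> (0::real)) at_top" by simp
  show "((\<lambda>s::real. s * ln s * exp(-3 * ln s)) \<longlongrightarrow> 0) at_top" by real_asymp
qed

lemma upper_bd:
  fixes a s :: real
  assumes a: "0 < a" "a < 1" and s: "ln s > 1" "(ln s)^2 < s"
  shows "s * integral {0..1} (\<lambda>x. exp(s * x * ln(a * x))) * ln s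
     \<le> ln s / (ln s - 2 * ln (ln s)) + s * ln s * exp((ln a / a) * (ln s)^2)"
proof -
  define L where "L = ln s"
  have "0 \<le> (ln s)^2" by simp
  then have sp: "s > 0" using s by linarith
  have Lp: "L > 1" using s L_def by simp
  define c where "c = L - 2 * ln L"
  have "ln (L^2) < ln s" using s Lp L_def sp by (subst ln_less_cancel_iff) auto
  then have cp: "c > 0" using Lp L_def c_def by (simp add: ln_realpow)
  define dd where "dd = L^2/(a * s)"
  have dp: "dd > 0" using a sp Lp dd_def by simp
  have lnad: "ln (a * dd) = - c" using a sp Lp unfolding dd_def c_def L_def
    by (simp add: ln_div ln_realpow)
  define E where "E = exp((ln a / a) * L^2)"
  have Ep: "E > 0" using E_def by simp
  define F where "F = (\<lambda>x. exp(s * x * ln(a * x)))"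
  have lna: "ln a < 0" using a by simp
  have pw: "F x \<le> exp(-(c * s) * x) + E" if x: "x \<in> {0..1}" for x
  proof (cases "x = 0")
    case True then show ?thesis using Ep F_def by simp
  next
    case False
    then have xp: "x > 0" using x by simp
    show ?thesis
    proof (cases "x \<le> dd")
      case True
      have "ln (a * x) \<le> ln (a * dd)" using True xp a by simp
      then have "s * x * ln(a * x) \<le> s * x * (-c)" using lnad sp xp by (intro mult_left_mono) auto
      then have "F x \<le> exp(-(c * s) * x)" unfolding F_def by (simp add: algebra_simps)
      then show ?thesis using Ep by simp
    next
      case False
      have "ln (a * x) \<le> ln a" using x xp a by (simp add: mult_le_cancel_left1)
      then have "x * ln(a * x) \<le> x * ln a" using xp by (simp add: mult_left_mono)
      also have "\<dots> \<le> dd * ln a" using False lna by (simp add: mult_right_mono_neg)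
      finally have "s * (x * ln(a * x)) \<le> s * (dd * ln a)" using sp by (simp add: mult_left_mono)
      also have "s * (dd * ln a) = (ln a / a) * L^2" unfolding dd_def using sp a by (simp add: field_simps)
      finally have "F x \<le> E" unfolding F_def E_def by (simp add: mult.assoc)
      then show ?thesis by (smt (verit) exp_gt_zero)
    qed
  qed
  have int1: "F integrable_on {0..1}" unfolding F_def
    by (rule integrable_continuous_interval[OF cont_int[OF a(1)]])
  have hi: "((\<lambda>x. exp(-(c * s) * x) + E) has_integral ((exp(-(c * s) * 0) - exp(-(c * s) * 1))/(c * s) + E)) {0..1}"
    using has_integral_add[OF exp_int[of "c * s" 0 1] has_integral_const_real[of E 0 1]] cp sp by simp
  have "integral {0..1} F \<le> (exp(-(c * s) * 0) - exp(-(c * s) * 1))/(c * s) + E"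
    using has_integral_le[OF integrable_integral[OF int1] hi] pw by simp
  also have "\<dots> \<le> 1/(c * s) + E" using cp sp by (simp add: divide_right_mono)
  finally have "integral {0..1} F \<le> 1/(c * s) + E" .
  then have "s * integral {0..1} F * L \<le> s * (1/(c * s) + E) * L"
    using sp Lp by (simp add: mult_left_mono mult_right_mono)
  also have "\<dots> = L / c + s * L * E" using sp cp by (simp add: field_simps)
  finally show ?thesis unfolding F_def L_def c_def E_def .
qed

lemma lower_bd:
  fixes a s :: real
  assumes a: "0 < a" "a < 1" and s: "ln s > 1" "1 \<le> a * s * (ln s)^2"
  shows "(ln s / (ln s + 2 * ln (ln s))) * (exp (-(1/a) * ((ln s + 2 * ln (ln s)) / (ln s)^2))
           - exp (-((ln s + 2 * ln (ln s)) * s)))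
     \<le> s * integral {0..1} (\<lambda>x. exp(s * x * ln(a * x))) * ln s"
proof -
  define L where "L = ln s"
  have sp: "s > 0"
  proof (rule ccontr)
    assume "\<not> s > 0"
    then have "s * (a * (ln s)^2) \<le> 0" using a by (intro mult_nonpos_nonneg) auto
    then show False using s(2) by (simp add: mult.assoc mult.left_commute)
  qed
  have Lp: "L > 1" using s L_def by simp
  define c where "c = L + 2 * ln L"
  have "ln L > 0" using Lp by (rule ln_gt_zero)
  then have cp: "c > 0" using Lp c_def by linarith
  define ee where "ee = 1/(a * s * L^2)"
  have ep: "ee > 0" using a sp Lp ee_def by simp
  have e1: "ee \<le> 1" using s ee_def L_def by simp
  have lnae: "ln (a * ee) = - c" using a sp Lp unfolding ee_def c_def L_def
    by (simp add: ln_div ln_mult ln_realpow)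
  define F where "F = (\<lambda>x. exp(s * x * ln(a * x)))"
  have pw: "exp(-(c * s) * x) \<le> F x" if x: "x \<in> {ee..1}" for x
  proof -
    have "ln (a * ee) \<le> ln (a * x)" using x ep a by simp
    then have "s * x * (-c) \<le> s * x * ln(a * x)" using lnae sp x ep by (intro mult_left_mono) auto
    then show ?thesis unfolding F_def by (simp add: algebra_simps)
  qed
  have int1: "F integrable_on {0..1}" unfolding F_def
    by (rule integrable_continuous_interval[OF cont_int[OF a(1)]])
  have int2: "F integrable_on {ee..1}"
    by (rule integrable_on_subinterval[OF int1]) (use ep in auto)
  have "(exp(-(c * s) * ee) - exp(-(c * s) * 1))/(c * s) \<le> integral {ee..1} F"
    using has_integral_le[OF exp_int[of "c * s" ee 1] integrable_integral[OF int2]] pw cp sp e1 by simp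
  also have "\<dots> \<le> integral {0..1} F"
    by (rule integral_subset_le) (use int1 int2 ep in \<open>auto simp: F_def\<close>)
  finally have "s * ((exp(-(c * s) * ee) - exp(-(c * s) * 1))/(c * s)) * L \<le> s * integral {0..1} F * L"
    using sp Lp by (intro mult_right_mono mult_left_mono) auto
  moreover have "s * ((exp(-(c * s) * ee) - exp(-(c * s) * 1))/(c * s)) * L
     = (L / c) * (exp (-(1/a) * (c / L^2)) - exp (-(c * s)))"
    using sp cp a Lp unfolding ee_def by (simp add: field_simps)
  ultimately show ?thesis unfolding F_def L_def c_def by simp
qed

theorem mainTheorem7:
  fixes a :: real
  assumes "0 < a" and "a < 1"
  shows "(\<lambda>t. f t a) \<sim>[at_bot]
           (\<lambda>t. - 1 / (ln (- t / a) + ln (ln (- t / a) - 1)))"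
proof -
  have a: "0 < a" "a < 1" by fact+
  define I where "I = (\<lambda>s. integral {0..1} (\<lambda>x. exp(s*x*ln(a*x))))"
  define D where "D = (\<lambda>s. ln (s / a) + ln (ln (s / a) - 1))"
  define Up where "Up = (\<lambda>s::real. ln s / (ln s - 2 * ln (ln s)) + s * ln s * exp((ln a / a) * (ln s)^2))"
  define Lo where "Lo = (\<lambda>s::real. (ln s / (ln s + 2 * ln (ln s))) * (exp (-(1/a) * ((ln s + 2 * ln (ln s)) / (ln s)^2))
           - exp (-((ln s + 2 * ln (ln s)) * s))))"
  have ev1: "eventually (\<lambda>s::real. ln s > 1) at_top" by real_asymp
  have ev2: "eventually (\<lambda>s::real. (ln s)^2 < s) at_top" by real_asymp
  have ev3: "eventually (\<lambda>s::real. 1/a \<le> s * (ln s)^2) at_top"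
  proof -
    have "filterlim (\<lambda>s::real. s * (ln s)^2) at_top at_top" by real_asymp
    then show ?thesis unfolding filterlim_at_top by blast
  qed
  have ev3': "eventually (\<lambda>s::real. 1 \<le> a * s * (ln s)^2) at_top"
    using ev3 by eventually_elim (use a in \<open>simp add: field_simps\<close>)
  have lUp: "(Up \<longlongrightarrow> 1 + 0) at_top"
    unfolding Up_def
  proof (rule tendsto_add)
    show "((\<lambda>s::real. ln s / (ln s - 2 * ln (ln s))) \<longlongrightarrow> 1) at_top" by real_asymp
    have "ln a / a < 0" using a by (simp add: divide_neg_pos)
    then show "((\<lambda>s. s * ln s * exp((ln a / a) * (ln s)^2)) \<longlongrightarrow> 0) at_top" by (rule U2_lim)
  qed
  have lLo: "(Lo \<longlongrightarrow> 1 * (exp (-(1/a) * 0) - 0)) at_top"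
    unfolding Lo_def
  proof (intro tendsto_mult tendsto_diff tendsto_exp tendsto_const)
    show "((\<lambda>s::real. ln s / (ln s + 2 * ln (ln s))) \<longlongrightarrow> 1) at_top" by real_asymp
    show "((\<lambda>s::real. (ln s + 2 * ln (ln s)) / (ln s)^2) \<longlongrightarrow> 0) at_top" by real_asymp
    show "((\<lambda>s::real. exp (-((ln s + 2 * ln (ln s)) * s))) \<longlongrightarrow> 0) at_top" by real_asymp
  qed
  have lP: "((\<lambda>s. s * I s * ln s) \<longlongrightarrow> 1) at_top"
  proof (rule tendsto_sandwich[of Lo _ _ Up])
    show "eventually (\<lambda>s. Lo s \<le> s * I s * ln s) at_top"
      using ev1 ev3' by eventually_elim (unfold Lo_def I_def, rule lower_bd[OF a])
    show "eventually (\<lambda>s. s * I s * ln s \<le> Up s) at_top"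
      using ev1 ev2 by eventually_elim (unfold Up_def I_def, rule upper_bd[OF a])
    show "(Lo \<longlongrightarrow> 1) at_top" using lLo by simp
    show "(Up \<longlongrightarrow> 1) at_top" using lUp by simp
  qed
  have sa: "filterlim (\<lambda>s::real. s / a) at_top at_top"
  proof -
    have "filterlim (\<lambda>s::real. (1/a) * s) at_top at_top"
      by (rule filterlim_tendsto_pos_mult_at_top[OF tendsto_const _ filterlim_ident]) (use a in simp)
    then show ?thesis by (simp add: field_simps)
  qed
  have lD1: "((\<lambda>s. D s / ln (s / a)) \<longlongrightarrow> 1) at_top"
  proof -
    have "((\<lambda>u::real. (ln u + ln (ln u - 1)) / ln u) \<longlongrightarrow> 1) at_top" by real_asymp
    from filterlim_compose[OF this sa] show ?thesis unfolding D_def by (simp add: o_def)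
  qed
  have lD2: "((\<lambda>s. ln (s / a) / ln s) \<longlongrightarrow> 1) at_top"
  proof -
    have "((\<lambda>s::real. 1 / ln s) \<longlongrightarrow> 0) at_top" by real_asymp
    then have "((\<lambda>s::real. 1 - ln a * (1 / ln s)) \<longlongrightarrow> 1 - ln a * 0) at_top"
      by (intro tendsto_intros)
    moreover have "eventually (\<lambda>s. 1 - ln a * (1 / ln s) = ln (s / a) / ln s) at_top"
      using ev1 by eventually_elim (use a in \<open>auto simp: ln_div field_simps\<close>)
    ultimately show ?thesis by (simp add: tendsto_cong)
  qed
  have lall: "((\<lambda>s. (s * I s * ln s) * ((D s / ln (s / a)) * (ln (s / a) / ln s))) \<longlongrightarrow> 1 * (1 * 1)) at_top"
    by (intro tendsto_mult lP lD1 lD2)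
  have "((\<lambda>s. f (- s) a / (- 1 / (ln (- (- s) / a) + ln (ln (- (- s) / a) - 1)))) \<longlongrightarrow> 1) at_top"
  proof -
    have "eventually (\<lambda>s. (s * I s * ln s) * ((D s / ln (s / a)) * (ln (s / a) / ln s))
        = f (- s) a / (- 1 / (ln (- (- s) / a) + ln (ln (- (- s) / a) - 1)))) at_top"
      using ev1 eventually_gt_at_top[of "a"]
    proof eventually_elim
      case (elim s)
      have "ln (s / a) > 0" using elim a by simp
      then show ?case using elim unfolding f_def I_def D_def by (simp add: field_simps)
    qed
    with lall show ?thesis by (simp add: tendsto_cong)
  qed
  then have "((\<lambda>t. f t a / (- 1 / (ln (- t / a) + ln (ln (- t / a) - 1)))) \<longlongrightarrow> 1) at_bot"
    by (subst filterlim_at_bot_mirror) simp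
  then show ?thesis by (rule asymp_equivI')
qed

end
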